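(* Let $\omega\in\mathbb{C}$ and let $\{P_n\}_{n\geqslant0}$ be a $D_\omega$-classical monic OPS with recurrence $P_{n+2}=(x-\beta_{n+1})P_{n+1}-\gamma_{n+1}P_n$ ($n\geqslant0$), $P_1=x-\beta_0$, $P_0=1$, and let $Q_n:=(n+1)^{-1}D_\omega P_{n+1}$, which is a monic OPS with recurrence $Q_{n+2}=(x-\tilde\beta_{n+1})Q_{n+1}-\tilde\gamma_{n+1}Q_n$ ($n\geqslant0$), $Q_1=x-\tilde\beta_0$, $Q_0=1$. Put $\tilde\alpha^1_n:=(n+1)(\beta_{n+1}-\tilde\beta_n-\omega)$ and $\tilde\alpha^0_n:=(n+1)\gamma_{n+2}-(n+2)\tilde\gamma_{n+1}$ for $n\geqslant0$, so that $P_{n+2}=Q_{n+2}+\tilde\alpha^1_{n+1}Q_{n+1}+\tilde\alpha^0_nQ_n$ ($n\geqslant0$) and $P_1=Q_1+\tilde\alpha^1_0$. Suppose $\Phi(x)=a_2x^2+a_1x+a_0$ is a polynomial of degree at most two and $\alpha^2_{n+2},\alpha^1_{n+1},\alpha^0_n$ ($n\geqslant0$) are complex numbers with $\alpha^0_n\neq0$ such that $$\Phi(x)Q_n(x)=\alpha^2_{n+2}P_{n+2}(x)+\alpha^1_{n+1}P_{n+1}(x)+\alpha^0_nP_n(x),\quad n\geqslant0.$$ Then, with the convention $\tilde\gamma_0:=0$, $$\alpha^2_{n+2}=a_2\ (n\geqslant0),\qquad \alpha^1_{n+1}+a_2\tilde\alpha^1_{n+1}=a_2(\tilde\beta_{n+1}+\tilde\beta_n)+a_1\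 (n\geqslant0),$$ $$\alpha^1_{n+1}\tilde\alpha^1_n+a_2\tilde\alpha^0_n+\alpha^0_n=a_2(\tilde\gamma_{n+1}+\tilde\gamma_n+\tilde\beta_n^2)+a_1\tilde\beta_n+a_0\ (n\geqslant0),$$ $$\alpha^1_{n+1}\tilde\alpha^0_{n-1}+\alpha^0_n\tilde\alpha^1_{n-1}=a_2\tilde\gamma_n(\tilde\beta_n+\tilde\beta_{n-1})+a_1\tilde\gamma_n\ (n\geqslant1),$$ $$\alpha^0_{n+1}\tilde\alpha^0_{n-1}=a_2\tilde\gamma_{n+1}\tilde\gamma_n\ (n\geqslant1).$$
   Context: For $\omega\neq0$, $(D_\omega f)(x)=\frac{f(x+\omega)-f(x)}{\omega}$ on complex polynomials; $D_0=d/dx$. A monic OPS is a sequence of monic polynomials $P_n$, $\deg P_n=n$, with a linear functional $u$ such that $\langle u,P_nP_m\rangle=k_n\delta_{nm}$, $k_n\neq0$; such a sequence satisfies a three-term recurrence with $\gamma_n\neq0$. An OPS $\{P_n\}$ is $D_\omega$-classical if $\{(n+1)^{-1}D_\omega P_{n+1}\}_{n\geqslant0}$ is also an OPS; in that case a relation of the displayed form $\Phi Q_n=\alpha^2_{n+2}P_{n+2}+\alpha^1_{n+1}P_{n+1}+\alpha^0_nP_n$ with $\deg\Phi\leqslant2$ exists (first structure relation). *)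

theory Defs
  imports "HOL-Computational_Algebra.Polynomial"
begin

definition Dw :: "complex \<Rightarrow> complex poly \<Rightarrow> complex poly" where
  "Dw \<omega> f = (if \<omega> = 0 then pderiv f
              else smult (1 / \<omega>) (pcompose f [:\<omega>, 1:] - f))"

definition lin_functional :: "(complex poly \<Rightarrow> complex) \<Rightarrow> bool" where
  "lin_functional u \<longleftrightarrow> (\<forall>p q. u (p + q) = u p + u q) \<and> (\<forall>c p. u (smult c p) = c * u p)"

definition monic_OPS :: "(nat \<Rightarrow> complex poly) \<Rightarrow> bool" where
  "monic_OPS P \<longleftrightarrow> (\<forall>n. degree (P n) = n \<and> lead_coeff (P n) = 1) \<and>
     (\<exists>u k. lin_functional u \<and> (\<forall>n. k n \<noteq> 0) \<and>
        (\<forall>n m. u (P n * P m) = (if n = m then k n else 0)))"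

definition Dseq :: "complex \<Rightarrow> (nat \<Rightarrow> complex poly) \<Rightarrow> nat \<Rightarrow> complex poly" where
  "Dseq \<omega> P n = smult (1 / of_nat (n + 1)) (Dw \<omega> (P (n + 1)))"

definition Dw_classical :: "complex \<Rightarrow> (nat \<Rightarrow> complex poly) \<Rightarrow> bool" where
  "Dw_classical \<omega> P \<longleftrightarrow> monic_OPS P \<and> monic_OPS (Dseq \<omega> P)"

definition talpha1 :: "complex \<Rightarrow> (nat \<Rightarrow> complex) \<Rightarrow> (nat \<Rightarrow> complex) \<Rightarrow> nat \<Rightarrow> complex" where
  "talpha1 \<omega> \<beta> t\<beta> n = of_nat (n + 1) * (\<beta> (n + 1) - t\<beta> n - \<omega>)"

definition talpha0 :: "(nat \<Rightarrow> complex) \<Rightarrow> (nat \<Rightarrow> complex) \<Rightarrow> nat \<Rightarrow> complex" where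
  "talpha0 \<gamma> t\<gamma> n = of_nat (n + 1) * \<gamma> (n + 2) - of_nat (n + 2) * t\<gamma> (n + 1)"

definition gamma0conv :: "(nat \<Rightarrow> complex) \<Rightarrow> nat \<Rightarrow> complex" where
  "gamma0conv t\<gamma> n = (if n = 0 then 0 else t\<gamma> n)"

end

theory Submission
  imports Defs
begin

lemma Dw_add: "Dw w (p + q) = Dw w p + Dw w q"
proof (cases "w = 0")
  case True thus ?thesis by (simp add: Dw_def pderiv_add)
next
  case False
  have "pcompose (p + q) [:w,1:] - (p + q) = (pcompose p [:w,1:] - p) + (pcompose q [:w,1:] - q)"
    by (simp add: pcompose_add)
  thus ?thesis using False by (simp only: Dw_def if_False smult_add_right)
qed
lemma Dw_smult: "Dw w (smult c p) = smult c (Dw w p)"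
proof (cases "w = 0")
  case True thus ?thesis by (simp add: Dw_def pderiv_smult)
next
  case False
  have "pcompose (smult c p) [:w,1:] - smult c p = smult c (pcompose p [:w,1:] - p)"
    by (simp add: pcompose_smult smult_diff_right)
  thus ?thesis using False by (simp add: Dw_def)
qed
lemma Dw_diff: "Dw w (p - q) = Dw w p - Dw w q"
proof -
  have "p - q = p + smult (-1) q" by simp
  hence "Dw w (p - q) = Dw w p + smult (-1) (Dw w q)" by (simp only: Dw_add Dw_smult)
  thus ?thesis by simp
qed
lemma Dw_one: "Dw w 1 = 0"
  by (simp add: Dw_def pcompose_1)
lemma Dw_lin: "Dw w ([:c,1:] * p) = [:c + w, 1:] * Dw w p + p"
proof (cases "w = 0")
  case True
  have "pderiv [:c, 1:] = 1" by (simp add: pderiv_pCons)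
  hence "pderiv ([:c,1:] * p) = [:c,1:] * pderiv p + p" by (simp only: pderiv_mult) simp
  thus ?thesis using True by (simp only: Dw_def if_True) simp
next
  case False
  have "pcompose [:c,1:] [:w,1:] = [:c + w, 1:]" by (simp add: pcompose_pCons)
  hence e: "pcompose ([:c,1:] * p) [:w,1:] = [:c + w, 1:] * pcompose p [:w,1:]" by (simp only: pcompose_mult)
  have "[:c + w, 1:] * pcompose p [:w,1:] - [:c,1:] * p
     = [:c + w, 1:] * (pcompose p [:w,1:] - p) + ([:c + w, 1:] - [:c,1:]) * p"
    by (simp only: right_diff_distrib left_diff_distrib) simp
  also have "[:c + w, 1:] - [:c,1:] = [:w:]" by simp
  finally have "smult (1/w) ([:c + w, 1:] * pcompose p [:w,1:] - [:c,1:] * p)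
     = [:c + w, 1:] * smult (1/w) (pcompose p [:w,1:] - p) + p" using False
    by (simp only: smult_add_right mult_smult_right) simp
  thus ?thesis using False by (simp only: Dw_def if_False e)
qed

lemma lc: "smult a q2 - smult b (q2 + smult c q1 + smult d q0 + smult e q1) + smult f (smult g q0)
  = smult (a - b) q2 + smult (- (b * (c + e))) q1 + smult (f * g - b * d) (q0 :: complex poly)"
  by (simp add: algebra_simps smult_add_left smult_diff_left smult_add_right smult_diff_right)

theorem proposition2p1:
  fixes \<omega> :: complex and P :: "nat \<Rightarrow> complex poly"
    and \<beta> \<gamma> t\<beta> t\<gamma> :: "nat \<Rightarrow> complex"
    and a2 a1 a0 :: complex and \<alpha>2 \<alpha>1 \<alpha>0 :: "nat \<Rightarrow> complex"
  defines "Q \<equiv> Dseq \<omega> P"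
  assumes classical: "Dw_classical \<omega> P"
    and recP: "\<And>n. P (n + 2) = [:- \<beta> (n + 1), 1:] * P (n + 1) - smult (\<gamma> (n + 1)) (P n)"
    and P1: "P 1 = [:- \<beta> 0, 1:]" and P0: "P 0 = 1"
    and recQ: "\<And>n. Q (n + 2) = [:- t\<beta> (n + 1), 1:] * Q (n + 1) - smult (t\<gamma> (n + 1)) (Q n)"
    and Q1: "Q 1 = [:- t\<beta> 0, 1:]" and Q0: "Q 0 = 1"
    and nz: "\<And>n. \<alpha>0 n \<noteq> 0"
    and struct: "\<And>n. [:a0, a1, a2:] * Q n =
        smult (\<alpha>2 (n + 2)) (P (n + 2)) + smult (\<alpha>1 (n + 1)) (P (n + 1)) + smult (\<alpha>0 n) (P n)"
  shows "(\<forall>n. \<alpha>2 (n + 2) = a2)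
    \<and> (\<forall>n. \<alpha>1 (n + 1) + a2 * talpha1 \<omega> \<beta> t\<beta> (n + 1) = a2 * (t\<beta> (n + 1) + t\<beta> n) + a1)
    \<and> (\<forall>n. \<alpha>1 (n + 1) * talpha1 \<omega> \<beta> t\<beta> n + a2 * talpha0 \<gamma> t\<gamma> n + \<alpha>0 n
           = a2 * (gamma0conv t\<gamma> (n + 1) + gamma0conv t\<gamma> n + (t\<beta> n)\<^sup>2) + a1 * t\<beta> n + a0)
    \<and> (\<forall>n\<ge>1. \<alpha>1 (n + 1) * talpha0 \<gamma> t\<gamma> (n - 1) + \<alpha>0 n * talpha1 \<omega> \<beta> t\<beta> (n - 1)
           = a2 * t\<gamma> n * (t\<beta> n + t\<beta> (n - 1)) + a1 * t\<gamma> n)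
    \<and> (\<forall>n\<ge>1. \<alpha>0 (n + 1) * talpha0 \<gamma> t\<gamma> (n - 1) = a2 * t\<gamma> (n + 1) * t\<gamma> n)"
proof -
  let ?x = "[:0,1:] :: complex poly"
  have QP: "Dw \<omega> (P (n + 1)) = smult (of_nat (n + 1)) (Q n)" for n
  proof -
    have "(of_nat (n + 1) :: complex) \<noteq> 0" by (simp only: of_nat_eq_0_iff)
    then show ?thesis unfolding Q_def Dseq_def by simp
  qed
  have mQ: "monic_OPS Q" using classical unfolding Dw_classical_def Q_def by simp
  then obtain u k where lu: "lin_functional u" and knz: "\<And>n. k n \<noteq> 0"
    and orth: "\<And>n m. u (Q n * Q m) = (if n = m then k n else 0)"
    unfolding monic_OPS_def by blast
  define C where "C j p = u (p * Q j) / k j" for j p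
  have uadd: "u (p + q) = u p + u q" and usm: "u (smult c p) = c * u p" for p q c
    using lu unfolding lin_functional_def by auto
  have Cadd: "C j (p + q) = C j p + C j q" for j p q
    unfolding C_def by (simp add: distrib_right uadd add_divide_distrib)
  have Csm: "C j (smult c p) = c * C j p" for j c p
    unfolding C_def by (simp add: usm)
  have Cdiff: "C j (p - q) = C j p - C j q" for j p q
  proof -
    have "p - q = p + smult (-1) q" by simp
    then show ?thesis by (simp only: Cadd Csm) simp
  qed
  have CQ: "C j (Q i) = (if i = j then 1 else 0)" for i j
    unfolding C_def using knz by (simp add: orth)
  have xQ: "?x * Q (m + 1) = Q (m + 2) + smult (t\<beta> (m + 1)) (Q (m + 1)) + smult (t\<gamma> (m + 1)) (Q m)" for m
  proof -
    have "[:- t\<beta> (m + 1), 1:] = ?x - [:t\<beta> (m + 1):]" by simp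
    then show ?thesis using recQ[of m] by (simp add: algebra_simps gamma0conv_def)
  qed
  have xQ0: "?x * Q 0 = Q 1 + smult (t\<beta> 0) (Q 0)" using Q0 Q1 by simp
  have PQ: "P (m + 2) = Q (m + 2) + smult (talpha1 \<omega> \<beta> t\<beta> (m + 1)) (Q (m + 1)) + smult (talpha0 \<gamma> t\<gamma> m) (Q m)" for m
  proof -
    have d3: "Dw \<omega> (P (m + 3)) = [:- \<beta> (m + 2) + \<omega>, 1:] * Dw \<omega> (P (m + 2)) + P (m + 2) - smult (\<gamma> (m + 2)) (Dw \<omega> (P (m + 1)))"
    proof -
      have i: "m + 1 + 2 = m + 3" "m + 1 + 1 = m + 2" by simp_all
      have r: "P (m + 3) = [:- \<beta> (m + 2), 1:] * P (m + 2) - smult (\<gamma> (m + 2)) (P (m + 1))"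
        using recP[of "m + 1"] by (simp only: i)
      show ?thesis by (simp only: r Dw_diff Dw_lin Dw_smult)
    qed
    have e: "smult (of_nat (m + 3)) (Q (m + 2)) = [:- \<beta> (m + 2) + \<omega>, 1:] * smult (of_nat (m + 2)) (Q (m + 1)) + P (m + 2) - smult (\<gamma> (m + 2)) (smult (of_nat (m + 1)) (Q m))"
    proof -
      have i: "m + 2 + 1 = m + 3" "m + 1 + 1 = m + 2" by simp_all
      have q3: "Dw \<omega> (P (m + 3)) = smult (of_nat (m + 3)) (Q (m + 2))" using QP[of "m + 2"] by (simp only: i)
      have q2: "Dw \<omega> (P (m + 2)) = smult (of_nat (m + 2)) (Q (m + 1))" using QP[of "m + 1"] by (simp only: i)
      show ?thesis using d3 by (simp only: q3 q2 QP)
    qed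
    have sol: "\<And>a b c p :: complex poly. a = b + p - c \<Longrightarrow> p = a - b + c" by (simp add: algebra_simps gamma0conv_def)
    have l: "[:- \<beta> (m + 2) + \<omega>, 1:] * smult (of_nat (m + 2)) (Q (m + 1)) = smult (of_nat (m + 2)) (?x * Q (m + 1) + smult (- \<beta> (m + 2) + \<omega>) (Q (m + 1)))"
      by (simp only: mult_smult_right) (simp add: algebra_simps gamma0conv_def)
    have "P (m + 2) = smult (of_nat (m + 3)) (Q (m + 2)) - smult (of_nat (m + 2)) (Q (m + 2) + smult (t\<beta> (m + 1)) (Q (m + 1)) + smult (t\<gamma> (m + 1)) (Q m) + smult (- \<beta> (m + 2) + \<omega>) (Q (m + 1)))
       + smult (\<gamma> (m + 2)) (smult (of_nat (m + 1)) (Q m))"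
      using sol[OF e] unfolding l xQ .
    also have "\<dots> = smult (of_nat (m + 3) - of_nat (m + 2)) (Q (m + 2)) + smult (- (of_nat (m + 2) * (t\<beta> (m + 1) + (- \<beta> (m + 2) + \<omega>)))) (Q (m + 1))
        + smult (\<gamma> (m + 2) * of_nat (m + 1) - of_nat (m + 2) * t\<gamma> (m + 1)) (Q m)"
      by (rule lc)
    also have "of_nat (m + 3) - of_nat (m + 2) = (1::complex)" by simp
    also have "- (of_nat (m + 2) * (t\<beta> (m + 1) + (- \<beta> (m + 2) + \<omega>))) = talpha1 \<omega> \<beta> t\<beta> (m + 1)"
      by (simp add: talpha1_def algebra_simps)
    also have "\<gamma> (m + 2) * of_nat (m + 1) - of_nat (m + 2) * t\<gamma> (m + 1) = talpha0 \<gamma> t\<gamma> m"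
      by (simp add: talpha0_def algebra_simps)
    finally show ?thesis by simp
  qed
  have P1': "P (Suc 0) = Q (Suc 0) + smult (talpha1 \<omega> \<beta> t\<beta> 0) (Q 0)"
  proof -
    have r: "P 2 = [:- \<beta> 1, 1:] * P 1 - smult (\<gamma> 1) (P 0)" using recP[of 0] by (simp only: add.left_neutral)
    have "Dw \<omega> (P 2) = [:- \<beta> 1 + \<omega>, 1:] * Dw \<omega> (P 1) + P 1 - smult (\<gamma> 1) (Dw \<omega> (P 0))"
      by (simp only: r Dw_diff Dw_lin Dw_smult)
    moreover have "Dw \<omega> (P 2) = smult 2 (Q 1)" using QP[of 1] by (simp only: one_add_one of_nat_numeral)
    moreover have "Dw \<omega> (P 1) = 1" using QP[of 0] Q0 by (simp only: add.left_neutral of_nat_1 smult_1_left)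
    moreover have "Dw \<omega> (P 0) = 0" using P0 Dw_one by simp
    ultimately have "smult 2 (Q 1) = [:- \<beta> 1 + \<omega>, 1:] + P 1" by simp
    then have "2 * t\<beta> 0 = \<beta> 1 - \<omega> + \<beta> 0" using P1 Q1 by (simp add: algebra_simps gamma0conv_def)
    then show ?thesis using P1 Q1 Q0 by (simp add: talpha1_def)
  qed
  have P0': "P 0 = Q 0" using P0 Q0 by simp
  have xQ': "?x * Q (Suc m) = Q (Suc (Suc m)) + smult (t\<beta> (Suc m)) (Q (Suc m)) + smult (t\<gamma> (Suc m)) (Q m)" for m
    using xQ[of m] by (simp only: Suc_eq_plus1 add.assoc one_add_one)
  have xQ0': "?x * Q 0 = Q (Suc 0) + smult (t\<beta> 0) (Q 0)" using xQ0 by (simp only: One_nat_def)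
  have PQ': "P (Suc (Suc m)) = Q (Suc (Suc m)) + smult (talpha1 \<omega> \<beta> t\<beta> (Suc m)) (Q (Suc m)) + smult (talpha0 \<gamma> t\<gamma> m) (Q m)" for m
    using PQ[of m] by (simp only: Suc_eq_plus1 add.assoc one_add_one)
  have xQg: "?x * Q m = Q (Suc m) + smult (t\<beta> m) (Q m) + smult (gamma0conv t\<gamma> m) (Q (m - 1))" for m
    by (cases m) (simp_all only: xQ' xQ0' gamma0conv_def, simp_all)
  have Pg: "P (Suc m) = Q (Suc m) + smult (talpha1 \<omega> \<beta> t\<beta> m) (Q m) + smult (if m = 0 then 0 else talpha0 \<gamma> t\<gamma> (m - 1)) (Q (m - 1))" for m
    by (cases m) (simp_all only: PQ' P1', simp_all)
  have Pn: "P n = Q n + smult (if n = 0 then 0 else talpha1 \<omega> \<beta> t\<beta> (n - 1)) (Q (n - 1)) + smult (if n \<le> 1 then 0 else talpha0 \<gamma> t\<gamma> (n - 2)) (Q (n - 2))" for n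
  proof (cases n)
    case 0 then show ?thesis using P0' by simp
  next
    case (Suc m) then show ?thesis by (simp only: Pg) (cases m, simp_all)
  qed
  have sS: "[:a0, a1, a2:] * Q n = smult (\<alpha>2 (Suc (Suc n))) (P (Suc (Suc n))) + smult (\<alpha>1 (Suc n)) (P (Suc n)) + smult (\<alpha>0 n) (P n)" for n
    using struct[of n] by (simp only: Suc_eq_plus1 add.assoc one_add_one)
  have phi: "[:a0, a1, a2:] * q = smult a0 q + smult a1 (?x * q) + smult a2 (?x * (?x * q))" for q
    by (simp add: algebra_simps gamma0conv_def)
  have key: "C j ([:a0, a1, a2:] * Q n) = C j (smult (\<alpha>2 (Suc (Suc n))) (P (Suc (Suc n))) + smult (\<alpha>1 (Suc n)) (P (Suc n)) + smult (\<alpha>0 n) (P n))" for j n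
    using sS[of n] by simp
  note R = phi distrib_left mult_smult_right xQg Pn Cadd Csm CQ
  have A0: "\<alpha>2 (Suc (Suc n)) = a2" for n
    using key[of "Suc (Suc n)" n] by (simp only: R) (simp split: if_splits)
  have A1: "\<alpha>1 (Suc n) + a2 * talpha1 \<omega> \<beta> t\<beta> (Suc n) = a2 * (t\<beta> (Suc n) + t\<beta> n) + a1" for n
    using key[of "Suc n" n] A0[of n] by (simp only: R) (simp split: if_splits add: algebra_simps gamma0conv_def)
  have A2: "\<alpha>1 (Suc n) * talpha1 \<omega> \<beta> t\<beta> n + a2 * talpha0 \<gamma> t\<gamma> n + \<alpha>0 n = a2 * (gamma0conv t\<gamma> (Suc n) + gamma0conv t\<gamma> n + (t\<beta> n)\<^sup>2) + a1 * t\<beta> n + a0" for n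
    using key[of n n] A0[of n] by (simp only: R) (simp split: if_splits add: algebra_simps power2_eq_square gamma0conv_def)
  have A3: "\<alpha>1 (Suc (Suc k)) * talpha0 \<gamma> t\<gamma> k + \<alpha>0 (Suc k) * talpha1 \<omega> \<beta> t\<beta> k = a2 * t\<gamma> (Suc k) * (t\<beta> (Suc k) + t\<beta> k) + a1 * t\<gamma> (Suc k)" for k
    using key[of k "Suc k"] A0[of "Suc k"] by (simp only: R) (simp split: if_splits add: algebra_simps gamma0conv_def)
  have A4: "\<alpha>0 (Suc (Suc k)) * talpha0 \<gamma> t\<gamma> k = a2 * t\<gamma> (Suc (Suc k)) * t\<gamma> (Suc k)" for k
    using key[of k "Suc (Suc k)"] A0[of "Suc (Suc k)"] by (simp only: R) (simp split: if_splits add: algebra_simps gamma0conv_def)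
  show ?thesis
  proof (intro conjI allI impI)
    fix n show "\<alpha>2 (n + 2) = a2" using A0[of n] by simp
  next
    fix n show "\<alpha>1 (n + 1) + a2 * talpha1 \<omega> \<beta> t\<beta> (n + 1) = a2 * (t\<beta> (n + 1) + t\<beta> n) + a1"
      using A1[of n] by simp
  next
    fix n show "\<alpha>1 (n + 1) * talpha1 \<omega> \<beta> t\<beta> n + a2 * talpha0 \<gamma> t\<gamma> n + \<alpha>0 n
           = a2 * (gamma0conv t\<gamma> (n + 1) + gamma0conv t\<gamma> n + (t\<beta> n)\<^sup>2) + a1 * t\<beta> n + a0"
      using A2[of n] by simp
  next
    fix n :: nat assume "n \<ge> 1"
    then obtain k where n: "n = Suc k" by (cases n) auto
    show "\<alpha>1 (n + 1) * talpha0 \<gamma> t\<gamma> (n - 1) + \<alpha>0 n * talpha1 \<omega> \<beta> t\<beta> (n - 1)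
           = a2 * t\<gamma> n * (t\<beta> n + t\<beta> (n - 1)) + a1 * t\<gamma> n"
      using A3[of k] unfolding n by simp
  next
    fix n :: nat assume "n \<ge> 1"
    then obtain k where n: "n = Suc k" by (cases n) auto
    show "\<alpha>0 (n + 1) * talpha0 \<gamma> t\<gamma> (n - 1) = a2 * t\<gamma> (n + 1) * t\<gamma> n"
      using A4[of k] unfolding n by simp
  qed
qed

end
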